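(* Let $T$ be a finite tree, and let $\Delta$ and $\Sigma$ be orbits of the action of $\mathrm{Aut}(T)$ on the vertex set of $T$. For an orbit $\Theta$, let $T_\Theta$ be the subgraph of $T$ consisting of all vertices and edges of $T$ that lie on the path from $\alpha$ to $\beta$ for some $\alpha,\beta\in\Theta$. If some vertex $\gamma\in\Sigma$ is a vertex of $T_\Delta$, then $T_\Sigma$ is a subtree of $T_\Delta$.
   Context: $\mathrm{Aut}(T)$ is the automorphism group of $T$. *)

theory Defs
  imports Main
begin

definition graph :: "'a set \<Rightarrow> ('a \<Rightarrow> 'a \<Rightarrow> bool) \<Rightarrow> bool" where
  "graph V E \<longleftrightarrow> (\<forall>x y. E x y \<longrightarrow> x \<in> V \<and> y \<in> V \<and> E y x \<and> x \<noteq> y)"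

definition is_path :: "('a \<Rightarrow> 'a \<Rightarrow> bool) \<Rightarrow> 'a \<Rightarrow> 'a \<Rightarrow> 'a list \<Rightarrow> bool" where
  "is_path E a b xs \<longleftrightarrow> xs \<noteq> [] \<and> hd xs = a \<and> last xs = b \<and> distinct xs \<and>
     (\<forall>i. Suc i < length xs \<longrightarrow> E (xs ! i) (xs ! Suc i))"

definition connected_graph :: "'a set \<Rightarrow> ('a \<Rightarrow> 'a \<Rightarrow> bool) \<Rightarrow> bool" where
  "connected_graph V E \<longleftrightarrow> V \<noteq> {} \<and> (\<forall>a\<in>V. \<forall>b\<in>V. \<exists>xs. is_path E a b xs)"

definition is_cycle :: "('a \<Rightarrow> 'a \<Rightarrow> bool) \<Rightarrow> 'a list \<Rightarrow> bool" where
  "is_cycle E xs \<longleftrightarrow> length xs \<ge> 3 \<and> distinct xs \<and>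
     (\<forall>i. Suc i < length xs \<longrightarrow> E (xs ! i) (xs ! Suc i)) \<and> E (last xs) (hd xs)"

definition finite_tree :: "'a set \<Rightarrow> ('a \<Rightarrow> 'a \<Rightarrow> bool) \<Rightarrow> bool" where
  "finite_tree V E \<longleftrightarrow> finite V \<and> graph V E \<and> connected_graph V E \<and> \<not> (\<exists>xs. is_cycle E xs)"

definition is_aut :: "'a set \<Rightarrow> ('a \<Rightarrow> 'a \<Rightarrow> bool) \<Rightarrow> ('a \<Rightarrow> 'a) \<Rightarrow> bool" where
  "is_aut V E f \<longleftrightarrow> bij_betw f V V \<and> (\<forall>x\<in>V. \<forall>y\<in>V. E x y \<longleftrightarrow> E (f x) (f y))"

definition aut_orbit :: "'a set \<Rightarrow> ('a \<Rightarrow> 'a \<Rightarrow> bool) \<Rightarrow> 'a \<Rightarrow> 'a set" where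
  "aut_orbit V E x = {f x | f. is_aut V E f}"

definition is_aut_orbit :: "'a set \<Rightarrow> ('a \<Rightarrow> 'a \<Rightarrow> bool) \<Rightarrow> 'a set \<Rightarrow> bool" where
  "is_aut_orbit V E Th \<longleftrightarrow> (\<exists>x\<in>V. Th = aut_orbit V E x)"

definition span_verts :: "('a \<Rightarrow> 'a \<Rightarrow> bool) \<Rightarrow> 'a set \<Rightarrow> 'a set" where
  "span_verts E Th = {v. \<exists>a\<in>Th. \<exists>b\<in>Th. \<exists>xs. is_path E a b xs \<and> v \<in> set xs}"

definition span_edges :: "('a \<Rightarrow> 'a \<Rightarrow> bool) \<Rightarrow> 'a set \<Rightarrow> 'a \<Rightarrow> 'a \<Rightarrow> bool" where
  "span_edges E Th u v \<longleftrightarrow> (\<exists>a\<in>Th. \<exists>b\<in>Th. \<exists>xs i. is_path E a b xs \<and> Suc i < length xs \<and>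
      ((u = xs ! i \<and> v = xs ! Suc i) \<or> (v = xs ! i \<and> u = xs ! Suc i)))"

end

theory Submission
  imports Defs
begin


lemma is_path_succ: "is_path E a b xs \<longleftrightarrow> xs \<noteq> [] \<and> hd xs = a \<and> last xs = b \<and> distinct xs \<and> successively E xs"
  unfolding is_path_def successively_conv_nth by blast

fun wedges :: "'a list \<Rightarrow> ('a \<times> 'a) set" where
  "wedges (x # y # zs) = insert (x,y) (insert (y,x) (wedges (y # zs)))"
| "wedges _ = {}"

lemma wedges_sym: "(a,b) \<in> wedges w \<Longrightarrow> (b,a) \<in> wedges w"
  by (induction w rule: wedges.induct) auto

lemma wedges_set: "(a,b) \<in> wedges w \<Longrightarrow> a \<in> set w \<and> b \<in> set w"
  by (induction w rule: wedges.induct) auto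

lemma wedges_nth: "(u,v) \<in> wedges xs \<longleftrightarrow> (\<exists>i. Suc i < length xs \<and> ((u = xs!i \<and> v = xs!Suc i) \<or> (v = xs!i \<and> u = xs!Suc i)))"
proof (induction xs rule: wedges.induct)
  case (1 x y zs)
  show ?case
  proof
    assume "(u,v) \<in> wedges (x # y # zs)"
    then consider "(u,v) = (x,y)" | "(u,v) = (y,x)" | "(u,v) \<in> wedges (y#zs)" by auto
    then show "\<exists>i. Suc i < length (x # y # zs) \<and> ((u = (x # y # zs)!i \<and> v = (x # y # zs)!Suc i) \<or> (v = (x # y # zs)!i \<and> u = (x # y # zs)!Suc i))"
    proof cases
      case 1 then show ?thesis by (intro exI[of _ 0]) auto
    next
      case 2 then show ?thesis by (intro exI[of _ 0]) auto
    next
      case 3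
      then obtain i where "Suc i < length (y#zs)" "((u = (y#zs)!i \<and> v = (y#zs)!Suc i) \<or> (v = (y#zs)!i \<and> u = (y#zs)!Suc i))"
        using "1.IH" by blast
      then show ?thesis by (intro exI[of _ "Suc i"]) auto
    qed
  next
    assume "\<exists>i. Suc i < length (x # y # zs) \<and> ((u = (x # y # zs)!i \<and> v = (x # y # zs)!Suc i) \<or> (v = (x # y # zs)!i \<and> u = (x # y # zs)!Suc i))"
    then obtain i where i: "Suc i < length (x # y # zs)" "((u = (x # y # zs)!i \<and> v = (x # y # zs)!Suc i) \<or> (v = (x # y # zs)!i \<and> u = (x # y # zs)!Suc i))" by blast
    show "(u,v) \<in> wedges (x # y # zs)"
    proof (cases i)
      case 0 then show ?thesis using i by auto
    next
      case (Suc j)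
      then have "Suc j < length (y#zs)" "((u = (y#zs)!j \<and> v = (y#zs)!Suc j) \<or> (v = (y#zs)!j \<and> u = (y#zs)!Suc j))"
        using i by auto
      then have "(u,v) \<in> wedges (y#zs)" using "1.IH" by blast
      then show ?thesis by simp
    qed
  qed
qed auto

lemma wedges_take: "wedges (take k xs) \<subseteq> wedges xs"
proof
  fix p assume "p \<in> wedges (take k xs)"
  then obtain u v where p: "p = (u,v)" "(u,v) \<in> wedges (take k xs)" by (cases p) auto
  then obtain i where "Suc i < length (take k xs)" "((u = (take k xs)!i \<and> v = (take k xs)!Suc i) \<or> (v = (take k xs)!i \<and> u = (take k xs)!Suc i))"
    using wedges_nth by metis
  then have "Suc i < length xs" "((u = xs!i \<and> v = xs!Suc i) \<or> (v = xs!i \<and> u = xs!Suc i))" by auto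
  then show "p \<in> wedges xs" using p wedges_nth by metis
qed

lemma wedges_drop: "wedges (drop k xs) \<subseteq> wedges xs"
proof
  fix p assume "p \<in> wedges (drop k xs)"
  then obtain u v where p: "p = (u,v)" "(u,v) \<in> wedges (drop k xs)" by (cases p) auto
  then obtain i where "Suc i < length (drop k xs)" "((u = (drop k xs)!i \<and> v = (drop k xs)!Suc i) \<or> (v = (drop k xs)!i \<and> u = (drop k xs)!Suc i))"
    using wedges_nth by metis
  then have "Suc (k+i) < length xs" "((u = xs!(k+i) \<and> v = xs!Suc (k+i)) \<or> (v = xs!(k+i) \<and> u = xs!Suc (k+i)))" by auto
  then show "p \<in> wedges xs" using p wedges_nth by metis
qed

lemma wedges_append: "wedges (xs @ ys) \<subseteq> wedges xs \<union> wedges ys \<union> (if xs \<noteq> [] \<and> ys \<noteq> [] then {(last xs, hd ys), (hd ys, last xs)} else {})"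
proof (induction xs)
  case Nil then show ?case by simp
next
  case (Cons x xs) then show ?case by (cases xs; cases ys) auto
qed

lemma rtranclp_sym:
  assumes "\<And>a b. R a b \<Longrightarrow> R b a" and "R\<^sup>*\<^sup>* a b" shows "R\<^sup>*\<^sup>* b a"
  using assms(2)
proof (induction rule: rtranclp_induct)
  case base then show ?case by simp
next
  case (step y z) then show ?case using assms(1) converse_rtranclp_into_rtranclp by metis
qed

lemma rtranclp_path:
  assumes "R\<^sup>*\<^sup>* a b"
  shows "\<exists>xs. xs \<noteq> [] \<and> hd xs = a \<and> last xs = b \<and> distinct xs \<and> successively R xs"
  using assms
proof (induction rule: converse_rtranclp_induct)
  case base then show ?case by (intro exI[of _ "[b]"]) auto
next
  case (step a c)
  then obtain ys where ys: "ys \<noteq> []" "hd ys = c" "last ys = b" "distinct ys" "successively R ys" by blast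
  show ?case
  proof (cases "a \<in> set ys")
    case True
    then obtain as bs where s: "ys = as @ a # bs" using split_list by metis
    show ?thesis
      using ys s by (intro exI[of _ "a # bs"]) (auto simp: successively_append_iff)
  next
    case False
    then show ?thesis using ys step(1) by (intro exI[of _ "a # ys"]) (auto simp: successively_Cons)
  qed
qed

lemma walk_reach:
  assumes "successively Q w" "w \<noteq> []" "\<And>a b. (a,b) \<in> wedges w \<Longrightarrow> Q a b \<Longrightarrow> R\<^sup>*\<^sup>* a b"
  shows "R\<^sup>*\<^sup>* (hd w) (last w)"
  using assms
proof (induction w rule: wedges.induct)
  case (1 x y zs)
  have "R\<^sup>*\<^sup>* x y" using 1 by simp
  moreover have "R\<^sup>*\<^sup>* y (last (y#zs))" using 1 by auto
  ultimately show ?case by simp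
qed auto



definition rx :: "('a \<Rightarrow> 'a \<Rightarrow> bool) \<Rightarrow> 'a \<Rightarrow> 'a \<Rightarrow> 'a \<Rightarrow> 'a \<Rightarrow> bool" where
  "rx E x y = (\<lambda>a b. E a b \<and> {a,b} \<noteq> {x,y})"

lemma rx_sym: "graph V E \<Longrightarrow> rx E x y a b \<Longrightarrow> rx E x y b a"
proof -
  assume g: "graph V E" and r: "rx E x y a b"
  have "E b a" using g r unfolding rx_def graph_def by blast
  moreover have "{b,a} = {a,b}" by blast
  ultimately show ?thesis using r unfolding rx_def by simp
qed

lemma no_bypass:
  assumes g: "graph V E" and nc: "\<not> (\<exists>c. is_cycle E c)" and e: "E x y"
  shows "\<not> (rx E x y)\<^sup>*\<^sup>* x y"
proof
  assume "(rx E x y)\<^sup>*\<^sup>* x y"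
  then obtain zs where zs: "zs \<noteq> []" "hd zs = x" "last zs = y" "distinct zs" "successively (rx E x y) zs"
    using rtranclp_path by metis
  have xy: "x \<noteq> y" using g e unfolding graph_def by blast
  have "length zs \<noteq> 1"
  proof
    assume "length zs = 1" then obtain z where "zs = [z]" by (cases zs) auto
    then show False using zs xy by simp
  qed
  moreover have "length zs \<noteq> 2"
  proof
    assume "length zs = 2" then obtain z1 z2 where "zs = [z1, z2]"
      by (cases zs; cases "tl zs") auto
    then show False using zs by (simp add: rx_def)
  qed
  moreover have "length zs \<noteq> 0" using zs by simp
  ultimately have l3: "length zs \<ge> 3" by linarith
  have "successively E zs" using zs(5) by (rule successively_mono) (simp add: rx_def)
  have "E y x" using g e unfolding graph_def by blast
  then have "is_cycle E zs"
    unfolding is_cycle_def successively_conv_nth[symmetric] using l3 zs \<open>successively E zs\<close> by simp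
  then show False using nc by blast
qed

lemma tree_walk_edges:
  assumes g: "graph V E" and nc: "\<not> (\<exists>c. is_cycle E c)"
    and w: "successively (\<lambda>a b. a = b \<or> E a b) w" "w \<noteq> []"
    and p: "is_path E (hd w) (last w) xs" and i: "Suc i < length xs"
  shows "(xs!i, xs!Suc i) \<in> wedges w"
proof (rule ccontr)
  assume nw: "(xs!i, xs!Suc i) \<notin> wedges w"
  define x where "x = xs!i"
  define y where "y = xs!Suc i"
  let ?R = "rx E x y"
  have pp: "xs \<noteq> []" "hd xs = hd w" "last xs = last w" "distinct xs" "successively E xs"
    using p is_path_succ by metis+
  have exy: "E x y" using pp(5) i unfolding x_def y_def successively_conv_nth by blast
  have sym: "?R\<^sup>*\<^sup>* b a" if h: "?R\<^sup>*\<^sup>* a b" for a b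
    by (rule rtranclp_sym[OF _ h]) (erule rx_sym[OF g])
  have nw1: "(x,y) \<notin> wedges w" using nw unfolding x_def y_def .
  have nw2: "(y,x) \<notin> wedges w"
  proof
    assume "(y,x) \<in> wedges w" then have "(x,y) \<in> wedges w" by (rule wedges_sym)
    then show False using nw1 by simp
  qed
  have "?R\<^sup>*\<^sup>* (hd w) (last w)"
  proof (rule walk_reach[OF w])
    fix a b assume ab: "(a,b) \<in> wedges w" "a = b \<or> E a b"
    show "?R\<^sup>*\<^sup>* a b"
    proof (cases "a = b")
      case True then show ?thesis by simp
    next
      case False
      have "{a,b} \<noteq> {x,y}"
      proof
        assume "{a,b} = {x,y}"
        then have "(a,b) = (x,y) \<or> (a,b) = (y,x)" by (metis doubleton_eq_iff)
        then show False using ab nw1 nw2 by blast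
      qed
      then show ?thesis using ab False by (auto simp: rx_def)
    qed
  qed
  define A where "A = take (Suc i) xs"
  define B where "B = drop (Suc i) xs"
  have AB: "xs = A @ B" unfolding A_def B_def by simp
  have Ane: "A \<noteq> []" and Bne: "B \<noteq> []" unfolding A_def B_def using i by auto
  have Alast: "last A = x" unfolding A_def x_def using i by (simp add: take_Suc_conv_app_nth)
  have Ahd: "hd A = hd xs" unfolding A_def by simp
  have Bhd: "hd B = y" unfolding B_def y_def using i by (simp add: hd_drop_conv_nth)
  have Blast: "last B = last xs" unfolding B_def using i by simp
  have xA: "x \<in> set A" using Alast Ane by auto
  have yB: "y \<in> set B" using Bhd Bne by auto
  have disj: "set A \<inter> set B = {}" "distinct A" "distinct B" using pp(4) unfolding AB by auto
  have sA: "successively E A" and sB: "successively E B" using pp(5) unfolding AB successively_append_iff by auto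
  have RA: "?R\<^sup>*\<^sup>* (hd A) (last A)"
  proof (rule walk_reach[OF sA Ane])
    fix a b assume "(a,b) \<in> wedges A" "E a b"
    then have "a \<in> set A" "b \<in> set A" using wedges_set by metis+
    then have "y \<notin> {a,b}" using yB disj by auto
    then show "?R\<^sup>*\<^sup>* a b" using \<open>E a b\<close> by (auto simp: rx_def)
  qed
  have RB: "?R\<^sup>*\<^sup>* (hd B) (last B)"
  proof (rule walk_reach[OF sB Bne])
    fix a b assume "(a,b) \<in> wedges B" "E a b"
    then have "a \<in> set B" "b \<in> set B" using wedges_set by metis+
    then have "x \<notin> {a,b}" using xA disj by auto
    then show "?R\<^sup>*\<^sup>* a b" using \<open>E a b\<close> by (auto simp: rx_def)
  qed
  have "?R\<^sup>*\<^sup>* x (hd w)" using sym[OF RA] Alast Ahd pp(2) by simp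
  also have "?R\<^sup>*\<^sup>* (hd w) (last w)" by fact
  also have "?R\<^sup>*\<^sup>* (last w) y" using sym[OF RB] Bhd Blast pp(3) by simp
  finally show False using no_bypass[OF g nc exy] by blast
qed



lemma path_in_V:
  assumes g: "graph V E" and p: "is_path E a b xs" and a: "a \<in> V"
  shows "set xs \<subseteq> V"
proof
  fix z assume "z \<in> set xs"
  then obtain k where k: "k < length xs" "z = xs!k" by (metis in_set_conv_nth)
  show "z \<in> V"
  proof (cases k)
    case 0 then show ?thesis using k p a unfolding is_path_def by (metis hd_conv_nth)
  next
    case (Suc j)
    then have "E (xs!j) (xs!k)" using p k unfolding is_path_def by simp
    then show ?thesis using g k unfolding graph_def by blast
  qed
qed

lemma span_edges_w:
  assumes "a \<in> Th" "b \<in> Th" "is_path E a b p" "(s,t) \<in> wedges p"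
  shows "span_edges E Th s t"
  using assms unfolding span_edges_def wedges_nth by blast

lemma span_verts_I:
  assumes "a \<in> Th" "b \<in> Th" "is_path E a b p" "z \<in> set p"
  shows "z \<in> span_verts E Th"
  using assms unfolding span_verts_def by blast

lemma span_edges_verts:
  assumes "span_edges E Th s t" shows "s \<in> span_verts E Th" "t \<in> span_verts E Th"
proof -
  obtain a b xs i where h: "a \<in> Th" "b \<in> Th" "is_path E a b xs" "Suc i < length xs"
      "(s = xs ! i \<and> t = xs ! Suc i) \<or> (t = xs ! i \<and> s = xs ! Suc i)"
    using assms unfolding span_edges_def by blast
  have "xs!i \<in> set xs" "xs ! Suc i \<in> set xs" using h(4) by auto
  then have "s \<in> set xs" "t \<in> set xs" using h(5) by auto
  then show "s \<in> span_verts E Th" "t \<in> span_verts E Th" using h span_verts_I by metis+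
qed

lemma convex:
  assumes g: "graph V E" and nc: "\<not> (\<exists>c. is_cycle E c)" and conn: "connected_graph V E"
    and Th: "Th \<subseteq> V" and u: "u \<in> span_verts E Th" and v: "v \<in> span_verts E Th"
    and xs: "is_path E u v xs"
  shows "\<forall>i. Suc i < length xs \<longrightarrow> span_edges E Th (xs!i) (xs!Suc i)"
proof -
  obtain a b p where ap: "a \<in> Th" "b \<in> Th" "is_path E a b p" "u \<in> set p"
    using u unfolding span_verts_def by blast
  obtain c d q where cq: "c \<in> Th" "d \<in> Th" "is_path E c d q" "v \<in> set q"
    using v unfolding span_verts_def by blast
  obtain r where r: "is_path E b c r" using conn ap(2) cq(1) Th unfolding connected_graph_def by blast
  obtain k where k: "k < length p" "p!k = u" using ap(4) by (metis in_set_conv_nth)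
  obtain m where m: "m < length q" "q!m = v" using cq(4) by (metis in_set_conv_nth)
  define P where "P = drop k p"
  define Q where "Q = take (Suc m) q"
  have pp: "p \<noteq> []" "hd p = a" "last p = b" "successively E p" using ap(3) is_path_succ by metis+
  have qq: "q \<noteq> []" "hd q = c" "last q = d" "successively E q" using cq(3) is_path_succ by metis+
  have rr: "r \<noteq> []" "hd r = b" "last r = c" "successively E r" using r is_path_succ by metis+
  have Pp1: "P \<noteq> []" using k unfolding P_def by simp
  have Pp2: "hd P = u" using k unfolding P_def by (simp add: hd_drop_conv_nth)
  have Pp3: "last P = b" using k pp(3) unfolding P_def by simp
  note Pp = Pp1 Pp2 Pp3
  have Qp1: "Q \<noteq> []" using qq(1) unfolding Q_def by simp
  have Qp2: "hd Q = c" using qq(2) unfolding Q_def by simp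
  have Qp3: "last Q = v" using m unfolding Q_def by (simp add: take_Suc_conv_app_nth)
  note Qp = Qp1 Qp2 Qp3
  have "successively E (take k p @ drop k p)" using pp(4) by simp
  then have sP: "successively E P" unfolding P_def successively_append_iff by blast
  have "successively E (take (Suc m) q @ drop (Suc m) q)" using qq(4) by simp
  then have sQ: "successively E Q" unfolding Q_def successively_append_iff by blast
  let ?L = "\<lambda>a b. a = b \<or> E a b"
  define w where "w = P @ r @ Q"
  have L: "successively ?L xs" if "successively E xs" for xs
    using that by (rule successively_mono) simp
  have j1: "?L (last r) (hd Q)" using rr(3) Qp2 by simp
  have j2: "?L (last P) (hd (r @ Q))" using Pp3 rr(1,2) by simp
  have srQ: "successively ?L (r @ Q)"
    using successively_append_iff[of ?L r Q] L[OF sQ] L[OF rr(4)] j1 by blast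
  have sw: "successively ?L w" unfolding w_def
    using successively_append_iff[of ?L P "r @ Q"] L[OF sP] srQ j2 by blast
  have wne: "w \<noteq> []" and hw: "hd w = u" and lw: "last w = v"
    unfolding w_def using Pp Qp rr by auto
  have we: "wedges w \<subseteq> wedges P \<union> wedges r \<union> wedges Q \<union> {(b,b),(c,c)}"
  proof -
    have "wedges w \<subseteq> wedges P \<union> wedges (r @ Q) \<union> {(b,b)}"
      using wedges_append[of P "r @ Q"] Pp rr unfolding w_def by auto
    moreover have "wedges (r @ Q) \<subseteq> wedges r \<union> wedges Q \<union> {(c,c)}"
      using wedges_append[of r Q] Qp rr by auto
    ultimately show ?thesis by blast
  qed
  have P_sub: "wedges P \<subseteq> wedges p" unfolding P_def by (rule wedges_drop)
  have Q_sub: "wedges Q \<subseteq> wedges q" unfolding Q_def by (rule wedges_take)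
  show ?thesis
  proof (intro allI impI)
    fix i assume i: "Suc i < length xs"
    have ed: "(xs!i, xs!Suc i) \<in> wedges w"
      using tree_walk_edges[OF g nc sw wne, of xs i] xs hw lw i by simp
    have ne: "xs!i \<noteq> xs!Suc i" using xs i unfolding is_path_def by (simp add: nth_eq_iff_index_eq)
    have "(xs!i, xs!Suc i) \<in> wedges P \<union> wedges r \<union> wedges Q"
      using ed we ne by auto
    then consider "(xs!i, xs!Suc i) \<in> wedges p" | "(xs!i, xs!Suc i) \<in> wedges r" | "(xs!i, xs!Suc i) \<in> wedges q"
      using P_sub Q_sub by blast
    then show "span_edges E Th (xs!i) (xs!Suc i)"
    proof cases
      case 1 then show ?thesis by (rule span_edges_w[OF ap(1) ap(2) ap(3)])
    next
      case 2 then show ?thesis by (rule span_edges_w[OF ap(2) cq(1) r])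
    next
      case 3 then show ?thesis by (rule span_edges_w[OF cq(1) cq(2) cq(3)])
    qed
  qed
qed

lemma convex_verts:
  assumes g: "graph V E" and nc: "\<not> (\<exists>c. is_cycle E c)" and conn: "connected_graph V E"
    and Th: "Th \<subseteq> V" and u: "u \<in> span_verts E Th" and v: "v \<in> span_verts E Th"
    and xs: "is_path E u v xs"
  shows "set xs \<subseteq> span_verts E Th"
proof
  fix z assume "z \<in> set xs"
  then obtain j where j: "j < length xs" "z = xs!j" by (metis in_set_conv_nth)
  show "z \<in> span_verts E Th"
  proof (cases "Suc j < length xs")
    case True
    then show ?thesis using convex[OF assms] span_edges_verts j by metis
  next
    case False
    then have "j = length xs - 1" using j by simp
    moreover have "xs \<noteq> []" using j by auto
    ultimately have "z = last xs" using j by (simp add: last_conv_nth)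
    then show ?thesis using xs v unfolding is_path_def by simp
  qed
qed

lemma orbit_sub: "is_aut_orbit V E Th \<Longrightarrow> Th \<subseteq> V"
  unfolding is_aut_orbit_def aut_orbit_def is_aut_def bij_betw_def by auto

lemma aut_comp: "is_aut V E f \<Longrightarrow> is_aut V E g \<Longrightarrow> is_aut V E (f \<circ> g)"
  unfolding is_aut_def
proof (intro conjI ballI)
  assume f: "bij_betw f V V \<and> (\<forall>x\<in>V. \<forall>y\<in>V. E x y = E (f x) (f y))"
    and g: "bij_betw g V V \<and> (\<forall>x\<in>V. \<forall>y\<in>V. E x y = E (g x) (g y))"
  show "bij_betw (f \<circ> g) V V" using f g bij_betw_trans by blast
  fix x y assume "x \<in> V" "y \<in> V"
  moreover then have "g x \<in> V" "g y \<in> V" using g bij_betwE by blast+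
  ultimately have "E x y = E (g x) (g y)" "E (g x) (g y) = E (f (g x)) (f (g y))" using f g by blast+
  then show "E x y = E ((f \<circ> g) x) ((f \<circ> g) y)" by simp
qed

lemma aut_inv: "is_aut V E g \<Longrightarrow> is_aut V E (inv_into V g)"
  unfolding is_aut_def
proof (intro conjI ballI)
  assume g: "bij_betw g V V \<and> (\<forall>x\<in>V. \<forall>y\<in>V. E x y = E (g x) (g y))"
  show "bij_betw (inv_into V g) V V" using g bij_betw_inv_into by blast
  fix x y assume x: "x \<in> V" and y: "y \<in> V"
  have im: "g ` V = V" using g by (simp add: bij_betw_imp_surj_on)
  have ix: "inv_into V g x \<in> V" using inv_into_into[of x g V] x im by simp
  have iy: "inv_into V g y \<in> V" using inv_into_into[of y g V] y im by simp
  have gx: "g (inv_into V g x) = x" using f_inv_into_f[of x g V] x im by simp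
  have gy: "g (inv_into V g y) = y" using f_inv_into_f[of y g V] y im by simp
  have "E (inv_into V g x) (inv_into V g y) = E (g (inv_into V g x)) (g (inv_into V g y))"
    using g ix iy by simp
  then show "E x y = E (inv_into V g x) (inv_into V g y)" using gx gy by simp
qed

lemma orbit_closed:
  assumes "is_aut_orbit V E Th" "is_aut V E f" "a \<in> Th" shows "f a \<in> Th"
proof -
  obtain x where x: "x \<in> V" "Th = aut_orbit V E x" using assms(1) unfolding is_aut_orbit_def by blast
  then obtain h where h: "is_aut V E h" "a = h x" using assms(3) unfolding aut_orbit_def by blast
  have "is_aut V E (f \<circ> h)" using aut_comp assms(2) h(1) by blast
  then show ?thesis using x h unfolding aut_orbit_def by force
qed

lemma path_map:
  assumes f: "is_aut V E f" and p: "is_path E a b xs" and s: "set xs \<subseteq> V"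
  shows "is_path E (f a) (f b) (map f xs)"
proof -
  have pp: "xs \<noteq> []" "hd xs = a" "last xs = b" "distinct xs" "successively E xs" using p is_path_succ by metis+
  have inj: "inj_on f V" using f unfolding is_aut_def bij_betw_def by blast
  have "distinct (map f xs)" using pp(4) inj s by (simp add: distinct_map inj_on_subset)
  moreover have "successively E (map f xs)" unfolding successively_map
    using pp(5) by (rule successively_mono) (use f s in \<open>auto simp: is_aut_def\<close>)
  moreover have "map f xs \<noteq> []" "hd (map f xs) = f a" "last (map f xs) = f b"
    using pp by (auto simp: hd_map last_map)
  ultimately show ?thesis unfolding is_path_succ by blast
qed

lemma span_aut:
  assumes g: "graph V E" and o: "is_aut_orbit V E Th" and f: "is_aut V E f" and z: "z \<in> span_verts E Th"
  shows "f z \<in> span_verts E Th"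
proof -
  obtain a b p where ap: "a \<in> Th" "b \<in> Th" "is_path E a b p" "z \<in> set p"
    using z unfolding span_verts_def by blast
  have "set p \<subseteq> V" using path_in_V[OF g ap(3)] ap(1) orbit_sub[OF o] by blast
  then have pm: "is_path E (f a) (f b) (map f p)" by (rule path_map[OF f ap(3)])
  have fa: "f a \<in> Th" by (rule orbit_closed[OF o f ap(1)])
  have fb: "f b \<in> Th" by (rule orbit_closed[OF o f ap(2)])
  have "f z \<in> set (map f p)" using ap(4) by simp
  then show ?thesis by (rule span_verts_I[OF fa fb pm])
qed

lemma span_edges_sym: "span_edges E Th s t \<Longrightarrow> span_edges E Th t s"
  unfolding span_edges_def by blast

lemma span_edges_E:
  assumes g: "graph V E" and h: "span_edges E Th s t" shows "E s t \<and> s \<noteq> t"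
proof -
  obtain a b xs i where h: "a \<in> Th" "b \<in> Th" "is_path E a b xs" "Suc i < length xs"
      "(s = xs ! i \<and> t = xs ! Suc i) \<or> (t = xs ! i \<and> s = xs ! Suc i)"
    using h unfolding span_edges_def by blast
  have e: "E (xs!i) (xs!Suc i)" using h(3,4) unfolding is_path_def by blast
  then have e2: "E (xs!Suc i) (xs!i)" using g unfolding graph_def by blast
  have "xs!i \<noteq> xs!Suc i" using h(3,4) unfolding is_path_def by (simp add: nth_eq_iff_index_eq)
  then show ?thesis using h(5) e e2 by auto
qed

lemma span_sub_V:
  assumes g: "graph V E" and Th: "Th \<subseteq> V" shows "span_verts E Th \<subseteq> V"
proof
  fix z assume "z \<in> span_verts E Th"
  then obtain a b p where ap: "a \<in> Th" "b \<in> Th" "is_path E a b p" "z \<in> set p"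
    unfolding span_verts_def by blast
  then show "z \<in> V" using path_in_V[OF g ap(3)] Th by blast
qed

theorem mainTheorem10:
  fixes V :: "'a set" and E :: "'a \<Rightarrow> 'a \<Rightarrow> bool" and Delta Sigma :: "'a set" and gamma :: 'a
  assumes "finite_tree V E"
    and "is_aut_orbit V E Delta" and "is_aut_orbit V E Sigma"
    and "gamma \<in> Sigma" and "gamma \<in> span_verts E Delta"
  shows "span_verts E Sigma \<subseteq> span_verts E Delta
       \<and> (\<forall>u v. span_edges E Sigma u v \<longrightarrow> span_edges E Delta u v)
       \<and> finite_tree (span_verts E Sigma) (span_edges E Sigma)"
proof -
  have fin: "finite V" and g: "graph V E" and conn: "connected_graph V E" and nc: "\<not> (\<exists>c. is_cycle E c)"
    using assms(1) unfolding finite_tree_def by blast+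
  have DV: "Delta \<subseteq> V" by (rule orbit_sub[OF assms(2)])
  have SV: "Sigma \<subseteq> V" by (rule orbit_sub[OF assms(3)])
  have SinD: "Sigma \<subseteq> span_verts E Delta"
  proof
    fix s assume s: "s \<in> Sigma"
    obtain y where y: "y \<in> V" "Sigma = aut_orbit V E y" using assms(3) unfolding is_aut_orbit_def by blast
    obtain g0 where g0: "is_aut V E g0" "gamma = g0 y" using assms(4) y(2) unfolding aut_orbit_def by blast
    obtain h where h: "is_aut V E h" "s = h y" using s y(2) unfolding aut_orbit_def by blast
    have f: "is_aut V E (h \<circ> inv_into V g0)" by (rule aut_comp[OF h(1) aut_inv[OF g0(1)]])
    have inj: "inj_on g0 V" using g0(1) unfolding is_aut_def bij_betw_def by blast
    have "(h \<circ> inv_into V g0) gamma = s" using g0(2) h(2) inv_into_f_f[OF inj y(1)] by simp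
    then show "s \<in> span_verts E Delta" using span_aut[OF g assms(2) f assms(5)] by simp
  qed
  have SD: "span_verts E Sigma \<subseteq> span_verts E Delta"
  proof
    fix z assume "z \<in> span_verts E Sigma"
    then obtain a b p where ap: "a \<in> Sigma" "b \<in> Sigma" "is_path E a b p" "z \<in> set p"
      unfolding span_verts_def by blast
    have "a \<in> span_verts E Delta" "b \<in> span_verts E Delta" using ap SinD by blast+
    then show "z \<in> span_verts E Delta" using convex_verts[OF g nc conn DV _ _ ap(3)] ap(4) by blast
  qed
  have ED: "\<forall>u v. span_edges E Sigma u v \<longrightarrow> span_edges E Delta u v"
  proof (intro allI impI)
    fix s t assume "span_edges E Sigma s t"
    then obtain a b xs i where h: "a \<in> Sigma" "b \<in> Sigma" "is_path E a b xs" "Suc i < length xs"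
      "(s = xs ! i \<and> t = xs ! Suc i) \<or> (t = xs ! i \<and> s = xs ! Suc i)"
      unfolding span_edges_def by blast
    have "a \<in> span_verts E Delta" "b \<in> span_verts E Delta" using h SinD by blast+
    then have "span_edges E Delta (xs!i) (xs!Suc i)" using convex[OF g nc conn DV _ _ h(3)] h(4) by blast
    then show "span_edges E Delta s t" using h(5) span_edges_sym by metis
  qed
  have gS: "graph (span_verts E Sigma) (span_edges E Sigma)"
    unfolding graph_def
  proof (intro allI impI conjI)
    fix x y assume h: "span_edges E Sigma x y"
    show "x \<in> span_verts E Sigma" "y \<in> span_verts E Sigma" using span_edges_verts[OF h] by blast+
    show "span_edges E Sigma y x" using span_edges_sym[OF h] .
    show "x \<noteq> y" using span_edges_E[OF g h] by blast
  qed
  have gam: "gamma \<in> span_verts E Sigma"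
  proof -
    have "is_path E gamma gamma [gamma]" unfolding is_path_def by simp
    then show ?thesis using span_verts_I[OF assms(4) assms(4)] by simp
  qed
  have cS: "connected_graph (span_verts E Sigma) (span_edges E Sigma)"
    unfolding connected_graph_def
  proof (intro conjI ballI)
    show "span_verts E Sigma \<noteq> {}" using gam by blast
    fix a b assume a: "a \<in> span_verts E Sigma" and b: "b \<in> span_verts E Sigma"
    have "a \<in> V" "b \<in> V" using a b span_sub_V[OF g SV] by blast+
    then obtain xs where xs: "is_path E a b xs" using conn unfolding connected_graph_def by blast
    have "\<forall>i. Suc i < length xs \<longrightarrow> span_edges E Sigma (xs!i) (xs!Suc i)"
      by (rule convex[OF g nc conn SV a b xs])
    then have "is_path (span_edges E Sigma) a b xs" using xs unfolding is_path_def by blast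
    then show "\<exists>xs. is_path (span_edges E Sigma) a b xs" by blast
  qed
  have ncS: "\<not> (\<exists>c. is_cycle (span_edges E Sigma) c)"
  proof
    assume "\<exists>c. is_cycle (span_edges E Sigma) c"
    then obtain c where c: "is_cycle (span_edges E Sigma) c" by blast
    have "is_cycle E c" using c span_edges_E[OF g] unfolding is_cycle_def by blast
    then show False using nc by blast
  qed
  have finS: "finite (span_verts E Sigma)" using fin span_sub_V[OF g SV] finite_subset by blast
  show ?thesis using SD ED finS gS cS ncS unfolding finite_tree_def by blast
qed


end
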